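(* For each integer $n \geq 1$, let $Z = [Z_{i,j}]_{1 \leq i,j \leq n}$ be a random matrix whose entries are independent and identically distributed random variables that are positive almost surely, with mean $\nu = \nu(n) = \mathbb{E}Z_{1,1}$ and finite second moment $\delta = \delta(n) = \mathbb{E}Z_{1,1}^2$. Let $1 \leq r_1,\ldots,r_n \leq n$ be deterministic integers (possibly depending on $n$), let $\mathcal{M}$ be the set of all $n \times n$ matrices with entries in $\{0,1\}$ having exactly $r_i$ ones in the $i$-th row for each $1 \leq i \leq n$, and let $X = [X_{i,j}]$ be chosen uniformly at random from $\mathcal{M}$, independently of $Z$. Let $Y = [X_{i,j} Z_{i,j}]_{1 \leq i,j \leq n}$ and $T_n = \mathrm{per}(Y) = \sum_{\sigma} \prod_{i=1}^n Y_{i,\sigma(i)}$, the sum being over all permutations $\sigma$ of $\{1,\ldots,n\}$. Setting $\mu_n := \prod_{i=1}^n r_i \cdot \frac{\nu^n n!}{n^n}$, we have $\mathbb{E}T_n = \mu_n$. Moreover, let $r_{low} = \min_{1 \leq i \leq n} r_i$ and $r_{up} = \max_{1 \leq i \leq n} r_i$. If \[ \sqrt{n}\cdot\frac{\delta}{\nu^2 r_{low}} \longrightarrow 0 \quad\text{and}\quad n\left(\frac{\delta}{\nu^2 r_{low}} - \frac{1}{r_{up}}\right) \longrightarrow 0 \quad \text{as } n \to \infty,\] then \[ \mathbb{E}\left(\frac{T_n}{\mu_n} - 1\right)^2 \longrightarrow 0 \quad \text{as } n \to \infty. \]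
   Context: All quantities ($Z$, its distribution, $\nu$, $\delta$, the integers $r_i$) may depend on $n$; the limits are taken along $n \to \infty$. The permanent of an $n\times n$ matrix $A$ is $\mathrm{per}(A)=\sum_\sigma \prod_{i=1}^n A_{i,\sigma(i)}$ over all permutations $\sigma$ of $\{1,\dots,n\}$. *)

theory Defs
  imports "HOL-Probability.Probability"
begin

text \<open>Matrices are indexed by 0-based indices i, j < n, encoded as functions on nat \<times> nat.\<close>

text \<open>The set of n\<times>n 0/1 matrices with exactly r i ones in row i (entries outside the
  index range are fixed to 0 so that the set is finite).\<close>
definition row_sum_mats :: "nat \<Rightarrow> (nat \<Rightarrow> nat) \<Rightarrow> (nat \<times> nat \<Rightarrow> real) set" where
  "row_sum_mats n r = {X. (\<forall>i j. X (i, j) \<in> {0, 1}) \<and>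
      (\<forall>i j. \<not> (i < n \<and> j < n) \<longrightarrow> X (i, j) = 0) \<and>
      (\<forall>i<n. card {j. j < n \<and> X (i, j) = 1} = r i)}"

definition per :: "nat \<Rightarrow> (nat \<times> nat \<Rightarrow> real) \<Rightarrow> real" where
  "per n A = (\<Sum>\<sigma> \<in> {\<sigma>. \<sigma> permutes {..<n}}. \<Prod>i<n. A (i, \<sigma> i))"

definition joint_space :: "nat \<Rightarrow> (nat \<Rightarrow> nat) \<Rightarrow> real measure
     \<Rightarrow> ((nat \<times> nat \<Rightarrow> real) \<times> (nat \<times> nat \<Rightarrow> real)) measure" where
  "joint_space n r D = measure_pmf (pmf_of_set (row_sum_mats n r))
       \<Otimes>\<^sub>M (PiM ({..<n} \<times> {..<n}) (\<lambda>_. D))"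

definition Tn :: "nat \<Rightarrow> (nat \<times> nat \<Rightarrow> real) \<times> (nat \<times> nat \<Rightarrow> real) \<Rightarrow> real" where
  "Tn n XZ = per n (\<lambda>ij. fst XZ ij * snd XZ ij)"

end

theory Submission
  imports Defs "HOL-Real_Asymp.Real_Asymp"
begin
lemma card_subsets_containing:
  assumes "finite A" "B \<subseteq> A"
  shows "card {S. S \<subseteq> A \<and> card S = k \<and> B \<subseteq> S} =
    (if card B \<le> k then (card A - card B) choose (k - card B) else 0)"
proof (cases "card B \<le> k")
  case True
  have fB: "finite B" using assms finite_subset by blast
  have "bij_betw (\<lambda>T. T \<union> B) {T. T \<subseteq> A - B \<and> card T = k - card B}
      {S. S \<subseteq> A \<and> card S = k \<and> B \<subseteq> S}"
  proof (rule bij_betw_byWitness[where f'="\<lambda>S. S - B"])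
    show "\<forall>a\<in>{T. T \<subseteq> A - B \<and> card T = k - card B}. a \<union> B - B = a" by auto
    show "\<forall>a'\<in>{S. S \<subseteq> A \<and> card S = k \<and> B \<subseteq> S}. a' - B \<union> B = a'" by auto
    have c1: "card (T \<union> B) = card T + card B" if "T \<subseteq> A - B" for T
    proof -
      have "finite T" using that assms finite_subset by blast
      then show ?thesis using that fB by (subst card_Un_disjoint) auto
    qed
    have c2: "card (S - B) = card S - card B" if "S \<subseteq> A" "B \<subseteq> S" for S
      using that fB by (simp add: card_Diff_subset)
    show "(\<lambda>T. T \<union> B) ` {T. T \<subseteq> A - B \<and> card T = k - card B}
        \<subseteq> {S. S \<subseteq> A \<and> card S = k \<and> B \<subseteq> S}"
      using c1 True assms by auto
    show "(\<lambda>S. S - B) ` {S. S \<subseteq> A \<and> card S = k \<and> B \<subseteq> S}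
        \<subseteq> {T. T \<subseteq> A - B \<and> card T = k - card B}"
      using c2 by auto
  qed
  then have "card {S. S \<subseteq> A \<and> card S = k \<and> B \<subseteq> S} =
       card {T. T \<subseteq> A - B \<and> card T = k - card B}"
    by (simp add: bij_betw_same_card)
  also have "\<dots> = card (A - B) choose (k - card B)"
    using assms by (intro n_subsets) auto
  also have "card (A - B) = card A - card B" using assms fB by (simp add: card_Diff_subset)
  finally show ?thesis using True by simp
next
  case False
  have "{S. S \<subseteq> A \<and> card S = k \<and> B \<subseteq> S} = {}"
  proof (rule ccontr)
    assume "{S. S \<subseteq> A \<and> card S = k \<and> B \<subseteq> S} \<noteq> {}"
    then obtain S where S: "S \<subseteq> A" "card S = k" "B \<subseteq> S" by auto
    then have "card B \<le> card S" using assms by (meson card_mono finite_subset)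
    then show False using S False by simp
  qed
  then show ?thesis using False by (metis card.empty)
qed

lemma exp_partial_sum_le:
  fixes x :: real assumes "x \<ge> 0"
  shows "(\<Sum>k\<le>m. x ^ k / fact k) \<le> exp x"
proof -
  have "(\<Sum>k\<le>m. x ^ k / fact k) = (\<Sum>k\<in>{..m}. x ^ k /\<^sub>R fact k)" by (simp add: divide_inverse_commute)
  also have "\<dots> \<le> (\<Sum>k. x ^ k /\<^sub>R fact k)"
    by (rule sum_le_suminf[OF summable_exp_generic]) (use assms in auto)
  also have "\<dots> = exp x" by (simp add: exp_def)
  finally show ?thesis .
qed

lemma sum_Pow_card:
  fixes h :: "nat \<Rightarrow> real"
  assumes "finite A"
  shows "(\<Sum>S\<in>Pow A. h (card S)) = (\<Sum>k\<le>card A. real (card A choose k) * h k)"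
proof -
  have "(\<Sum>S\<in>Pow A. h (card S)) = (\<Sum>k\<in>{..card A}. \<Sum>S\<in>{S\<in>Pow A. card S = k}. h (card S))"
    using assms by (intro sum.group[symmetric]) (auto intro: card_mono)
  also have "\<dots> = (\<Sum>k\<le>card A. real (card A choose k) * h k)"
  proof (rule sum.cong[OF refl])
    fix k
    have "(\<Sum>S\<in>{S\<in>Pow A. card S = k}. h (card S)) = (\<Sum>S\<in>{S\<in>Pow A. card S = k}. h k)"
      by (rule sum.cong) auto
    also have "\<dots> = real (card {S. S \<subseteq> A \<and> card S = k}) * h k" by simp
    also have "\<dots> = real (card A choose k) * h k" using n_subsets[OF assms] by simp
    finally show "(\<Sum>S\<in>{S\<in>Pow A. card S = k}. h (card S)) = real (card A choose k) * h k" .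
  qed
  finally show ?thesis .
qed

lemma permutes_fixing:
  assumes "X \<subseteq> {..<n::nat}"
  shows "{\<rho>. \<rho> permutes {..<n} \<and> (\<forall>x\<in>X. \<rho> x = x)} = {\<rho>. \<rho> permutes ({..<n} - X)}"
proof (intro equalityI subsetI)
  fix \<rho> assume "\<rho> \<in> {\<rho>. \<rho> permutes {..<n} \<and> (\<forall>x\<in>X. \<rho> x = x)}"
  then show "\<rho> \<in> {\<rho>. \<rho> permutes ({..<n} - X)}"
    unfolding permutes_def by auto
next
  fix \<rho> assume "\<rho> \<in> {\<rho>. \<rho> permutes ({..<n} - X)}"
  then have p: "\<rho> permutes ({..<n} - X)" by simp
  then have "\<rho> permutes {..<n}" by (rule permutes_subset) auto
  moreover have "\<forall>x\<in>X. \<rho> x = x" using p by (auto intro: permutes_not_in)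
  ultimately show "\<rho> \<in> {\<rho>. \<rho> permutes {..<n} \<and> (\<forall>x\<in>X. \<rho> x = x)}" by simp
qed

lemma perm_fix_sum:
  fixes A B :: real
  assumes B: "0 < B" "B \<le> A"
  shows "(\<Sum>\<rho>\<in>{\<rho>. \<rho> permutes {..<n}}. \<Prod>i<n. if \<rho> i = i then A else B)
     \<le> fact n * B ^ n * exp ((A - B) / B)"
proof -
  define P where "P = {\<rho>. \<rho> permutes {..<n::nat}}"
  define c where "c = A - B"
  have finP: "finite P" unfolding P_def by (rule finite_permutations) simp
  have "(\<Prod>i<n. if \<rho> i = i then A else B) =
      (\<Sum>X\<in>Pow {..<n}. (if \<forall>x\<in>X. \<rho> x = x then c ^ card X * B ^ (n - card X) else 0))" for \<rho>
  proof -
    have "(\<Prod>i<n. if \<rho> i = i then A else B) = (\<Prod>i<n. (if \<rho> i = i then c else 0) + B)"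
      by (rule prod.cong) (auto simp: c_def)
    also have "\<dots> = (\<Sum>X\<in>Pow {..<n}. (\<Prod>x\<in>X. if \<rho> x = x then c else 0) * (\<Prod>x\<in>{..<n}-X. B))"
      by (rule prod_add) simp
    also have "\<dots> = (\<Sum>X\<in>Pow {..<n}. (if \<forall>x\<in>X. \<rho> x = x then c ^ card X * B ^ (n - card X) else 0))"
    proof (rule sum.cong[OF refl])
      fix X assume X: "X \<in> Pow {..<n}"
      then have fX: "finite X" by (auto intro: finite_subset)
      have cd: "card ({..<n} - X) = n - card X" using X fX by (simp add: card_Diff_subset)
      show "(\<Prod>x\<in>X. if \<rho> x = x then c else 0) * (\<Prod>x\<in>{..<n}-X. B) =
          (if \<forall>x\<in>X. \<rho> x = x then c ^ card X * B ^ (n - card X) else 0)"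
      proof (cases "\<forall>x\<in>X. \<rho> x = x")
        case True
        then have "(\<Prod>x\<in>X. if \<rho> x = x then c else 0) = (\<Prod>x\<in>X. c)" by (intro prod.cong) auto
        then show ?thesis using True cd by simp
      next
        case False
        then obtain x where "x \<in> X" "\<rho> x \<noteq> x" by auto
        then have "(\<Prod>x\<in>X. if \<rho> x = x then c else 0) = 0" using fX
          by (intro prod_zero) auto
        then show ?thesis using False by (simp only: if_False mult_zero_left)
      qed
    qed
    finally show ?thesis .
  qed
  then have "(\<Sum>\<rho>\<in>P. \<Prod>i<n. if \<rho> i = i then A else B) =
      (\<Sum>\<rho>\<in>P. \<Sum>X\<in>Pow {..<n}. (if \<forall>x\<in>X. \<rho> x = x then c ^ card X * B ^ (n - card X) else 0))"
    by simp
  also have "\<dots> = (\<Sum>X\<in>Pow {..<n}. \<Sum>\<rho>\<in>P. (if \<forall>x\<in>X. \<rho> x = x then c ^ card X * B ^ (n - card X) else 0))"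
    by (rule sum.swap)
  also have "\<dots> = (\<Sum>X\<in>Pow {..<n}. c ^ card X * B ^ (n - card X) * fact (n - card X))"
  proof (rule sum.cong[OF refl])
    fix X assume X: "X \<in> Pow {..<n}"
    then have fX: "finite X" by (auto intro: finite_subset)
    have "(\<Sum>\<rho>\<in>P. (if \<forall>x\<in>X. \<rho> x = x then c ^ card X * B ^ (n - card X) else 0)) =
        (\<Sum>\<rho>\<in>{\<rho>\<in>P. \<forall>x\<in>X. \<rho> x = x}. c ^ card X * B ^ (n - card X))"
      using finP by (rule sum.inter_filter[symmetric])
    also have "\<dots> = real (card {\<rho>\<in>P. \<forall>x\<in>X. \<rho> x = x}) * (c ^ card X * B ^ (n - card X))"
      by simp
    also have "{\<rho>\<in>P. \<forall>x\<in>X. \<rho> x = x} = {\<rho>. \<rho> permutes ({..<n} - X)}"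
      using permutes_fixing[of X n] X unfolding P_def by auto
    also have "card {\<rho>. \<rho> permutes ({..<n} - X)} = fact (n - card X)"
      using X fX by (intro card_permutations) (auto simp: card_Diff_subset)
    finally show "(\<Sum>\<rho>\<in>P. (if \<forall>x\<in>X. \<rho> x = x then c ^ card X * B ^ (n - card X) else 0)) =
        c ^ card X * B ^ (n - card X) * fact (n - card X)" by simp
  qed
  also have "\<dots> = (\<Sum>k\<le>n. real (n choose k) * (c ^ k * B ^ (n - k) * fact (n - k)))"
    using sum_Pow_card[of "{..<n}" "\<lambda>k. c ^ k * B ^ (n - k) * fact (n - k)"] by simp
  also have "\<dots> = fact n * B ^ n * (\<Sum>k\<le>n. (c / B) ^ k / fact k)"
    unfolding sum_distrib_left
  proof (rule sum.cong[OF refl])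
    fix k assume "k \<in> {..n}"
    then have k: "k \<le> n" by simp
    have "real (n choose k) = fact n / (fact k * fact (n - k))" by (rule binomial_fact[OF k])
    moreover have "B ^ n = B ^ k * B ^ (n - k)" using k by (simp flip: power_add)
    ultimately show "real (n choose k) * (c ^ k * B ^ (n - k) * fact (n - k)) =
        fact n * B ^ n * ((c / B) ^ k / fact k)"
      using B by (simp add: field_simps power_divide)
  qed
  also have "\<dots> \<le> fact n * B ^ n * exp (c / B)"
    using B by (intro mult_left_mono exp_partial_sum_le) (auto simp: c_def)
  finally show ?thesis unfolding P_def c_def .
qed

definition Phi :: "nat \<Rightarrow> (nat \<Rightarrow> nat set) \<Rightarrow> (nat \<times> nat \<Rightarrow> real)" where
  "Phi n S = (\<lambda>(i,j). if i < n \<and> j < n \<and> j \<in> S i then 1 else 0)"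

definition Rsets :: "nat \<Rightarrow> (nat \<Rightarrow> nat) \<Rightarrow> nat \<Rightarrow> nat set set" where
  "Rsets n r i = {S. S \<subseteq> {..<n} \<and> card S = r i}"

lemma Phi_bij: "bij_betw (Phi n) (PiE {..<n} (Rsets n r)) (row_sum_mats n r)"
proof (rule bij_betw_byWitness[where f'="\<lambda>X. restrict (\<lambda>i. {j. j < n \<and> X (i, j) = 1}) {..<n}"])
  show "\<forall>S\<in>PiE {..<n} (Rsets n r). restrict (\<lambda>i. {j. j < n \<and> Phi n S (i, j) = 1}) {..<n} = S"
  proof
    fix S assume S: "S \<in> PiE {..<n} (Rsets n r)"
    show "restrict (\<lambda>i. {j. j < n \<and> Phi n S (i, j) = 1}) {..<n} = S"
    proof (rule ext)
      fix i show "restrict (\<lambda>i. {j. j < n \<and> Phi n S (i, j) = 1}) {..<n} i = S i"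
      proof (cases "i < n")
        case True
        then have "S i \<in> Rsets n r i" using S by auto
        then have "S i \<subseteq> {..<n}" by (auto simp: Rsets_def)
        then show ?thesis using True by (auto simp: Phi_def)
      next
        case False
        then show ?thesis using S by (auto simp: PiE_def extensional_def)
      qed
    qed
  qed
  show "\<forall>X\<in>row_sum_mats n r. Phi n (restrict (\<lambda>i. {j. j < n \<and> X (i, j) = 1}) {..<n}) = X"
  proof
    fix X assume X: "X \<in> row_sum_mats n r"
    show "Phi n (restrict (\<lambda>i. {j. j < n \<and> X (i, j) = 1}) {..<n}) = X"
    proof (rule ext, clarify)
      fix i j
      have X01: "X (i,j) = 0 \<or> X (i,j) = 1" and Xout: "\<not>(i<n \<and> j<n) \<Longrightarrow> X (i,j) = 0"
        using X unfolding row_sum_mats_def by auto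
      show "Phi n (restrict (\<lambda>i. {j. j < n \<and> X (i, j) = 1}) {..<n}) (i, j) = X (i, j)"
        using X01 Xout by (auto simp: Phi_def)
    qed
  qed
  show "Phi n ` PiE {..<n} (Rsets n r) \<subseteq> row_sum_mats n r"
  proof (rule image_subsetI)
    fix S assume S: "S \<in> PiE {..<n} (Rsets n r)"
    have "card {j. j < n \<and> Phi n S (i, j) = 1} = r i" if "i < n" for i
    proof -
      have "S i \<in> Rsets n r i" using S that by auto
      then have "{j. j < n \<and> Phi n S (i, j) = 1} = S i" using that
        by (auto simp: Phi_def Rsets_def)
      then show ?thesis using \<open>S i \<in> Rsets n r i\<close> by (simp add: Rsets_def)
    qed
    then show "Phi n S \<in> row_sum_mats n r"
      unfolding row_sum_mats_def by (auto simp: Phi_def)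
  qed
  show "(\<lambda>X. restrict (\<lambda>i. {j. j < n \<and> X (i, j) = 1}) {..<n}) ` row_sum_mats n r \<subseteq> PiE {..<n} (Rsets n r)"
    unfolding row_sum_mats_def Rsets_def by auto
qed

lemma finite_Rsets: "finite (Rsets n r i)"
  unfolding Rsets_def by (rule finite_subset[of _ "Pow {..<n}"]) auto

lemma card_Rsets: "card (Rsets n r i) = n choose r i"
  unfolding Rsets_def using n_subsets[of "{..<n}" "r i"] by simp

lemma finite_rsm: "finite (row_sum_mats n r)"
  using bij_betw_finite[OF Phi_bij] finite_Rsets by (metis finite_PiE finite_lessThan)

lemma card_rsm: "card (row_sum_mats n r) = (\<Prod>i<n. n choose r i)"
  using bij_betw_same_card[OF Phi_bij] card_PiE[of "{..<n}" "Rsets n r"] card_Rsets by simp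

lemma row_ratio:
  assumes "1 \<le> k" "k \<le> n" "a < n" "b < n" and that: "r' i = k"
  shows "real (card {S \<in> Rsets n r' i. {a, b} \<subseteq> S}) / real (n choose k) =
    (if a = b then real k / real n else real k * (real k - 1) / (real n * (real n - 1)))"
proof -
  have eq: "{S \<in> Rsets n r' i. {a, b} \<subseteq> S} = {S. S \<subseteq> {..<n} \<and> card S = k \<and> {a,b} \<subseteq> S}"
    using that by (auto simp: Rsets_def)
  have pos: "(n choose k) > 0" using assms by simp
  have abs1: "real k * real (n choose k) = real n * real ((n - 1) choose (k - 1))"
    using binomial_absorption[of "k - 1" n] assms by (simp flip: of_nat_mult)
  show ?thesis
  proof (cases "a = b")
    case True
    then have "card {S \<in> Rsets n r' i. {a, b} \<subseteq> S} = (n - 1) choose (k - 1)"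
      using eq card_subsets_containing[of "{..<n}" "{a,b}" k] assms by simp
    then show ?thesis using True abs1 pos assms by (simp add: field_simps)
  next
    case False
    then have c2: "card {a, b} = 2" by simp
    have c: "card {S \<in> Rsets n r' i. {a, b} \<subseteq> S} = (if 2 \<le> k then (n - 2) choose (k - 2) else 0)"
    proof -
      have "card {S. S \<subseteq> {..<n} \<and> card S = k \<and> {a,b} \<subseteq> S} =
          (if card {a,b} \<le> k then (card {..<n::nat} - card {a,b}) choose (k - card {a,b}) else 0)"
        by (rule card_subsets_containing) (use assms in auto)
      then show ?thesis unfolding eq c2 by simp
    qed
    show ?thesis
    proof (cases "2 \<le> k")
      case True
      have nat2: "(k - 1) * ((n - 1) choose (k - 1)) = (n - 1) * ((n - 2) choose (k - 2))"
        using binomial_absorption[of "k - 2" "n - 1"] True by (simp add: numeral_2_eq_2 Suc_diff_Suc)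
      have abs2: "real (k - 1) * real ((n - 1) choose (k - 1)) = real (n - 1) * real ((n - 2) choose (k - 2))"
        by (metis nat2 of_nat_mult)
      have "real (k - 1) = real k - 1" "real (n - 1) = real n - 1" using True assms by auto
      then have "real k * (real k - 1) * real (n choose k) = real n * (real n - 1) * real ((n - 2) choose (k - 2))"
        using abs1 abs2 by (metis mult.assoc mult.left_commute)
      then show ?thesis using c True False pos assms by (simp add: field_simps)
    next
      case False
      then show ?thesis using c \<open>a \<noteq> b\<close> assms by simp
    qed
  qed
qed

lemma X_moment:
  assumes r: "\<And>i. i < n \<Longrightarrow> 1 \<le> r i \<and> r i \<le> n"
    and ab: "\<And>i. i < n \<Longrightarrow> a i < n \<and> b i < n"
  shows "(\<Sum>X\<in>row_sum_mats n r. \<Prod>i<n. X (i, a i) * X (i, b i)) / real (card (row_sum_mats n r)) =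
   (\<Prod>i<n. if a i = b i then real (r i) / real n
       else real (r i) * (real (r i) - 1) / (real n * (real n - 1)))"
proof -
  define F where "F i s = (if {a i, b i} \<subseteq> s then 1 else (0::real))" for i s
  have "(\<Sum>X\<in>row_sum_mats n r. \<Prod>i<n. X (i, a i) * X (i, b i)) =
      (\<Sum>S\<in>PiE {..<n} (Rsets n r). \<Prod>i<n. Phi n S (i, a i) * Phi n S (i, b i))"
    by (rule sum.reindex_bij_betw[OF Phi_bij, symmetric])
  also have "\<dots> = (\<Sum>S\<in>PiE {..<n} (Rsets n r). \<Prod>i<n. F i (S i))"
    by (intro sum.cong prod.cong refl) (auto simp: Phi_def F_def ab)
  also have "\<dots> = (\<Prod>i<n. \<Sum>s\<in>Rsets n r i. F i s)"
    by (rule prod_sum_PiE[symmetric]) (auto simp: finite_Rsets)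
  also have "\<dots> = (\<Prod>i<n. real (card {s \<in> Rsets n r i. {a i, b i} \<subseteq> s}))"
  proof (rule prod.cong[OF refl])
    fix i
    have "(\<Sum>s\<in>Rsets n r i. F i s) = (\<Sum>s\<in>{s \<in> Rsets n r i. {a i, b i} \<subseteq> s}. 1)"
      unfolding F_def by (rule sum.inter_filter[symmetric, OF finite_Rsets])
    then show "(\<Sum>s\<in>Rsets n r i. F i s) = real (card {s \<in> Rsets n r i. {a i, b i} \<subseteq> s})" by simp
  qed
  finally have num: "(\<Sum>X\<in>row_sum_mats n r. \<Prod>i<n. X (i, a i) * X (i, b i)) =
     (\<Prod>i<n. real (card {s \<in> Rsets n r i. {a i, b i} \<subseteq> s}))" .
  have den: "real (card (row_sum_mats n r)) = (\<Prod>i<n. real (n choose r i))"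
    by (simp add: card_rsm)
  show ?thesis unfolding num den prod_dividef[symmetric]
  proof (rule prod.cong[OF refl])
    fix i assume "i \<in> {..<n}"
    then have i: "i < n" by simp
    show "real (card {s \<in> Rsets n r i. {a i, b i} \<subseteq> s}) / real (n choose r i) =
      (if a i = b i then real (r i) / real n
       else real (r i) * (real (r i) - 1) / (real n * (real n - 1)))"
      using row_ratio[of "r i" n "a i" "b i" r i] r[OF i] ab[OF i] by simp
  qed
qed

lemma X_moment1:
  assumes r: "\<And>i. i < n \<Longrightarrow> 1 \<le> r i \<and> r i \<le> n"
    and a: "\<And>i. i < n \<Longrightarrow> a i < n"
  shows "(\<Sum>X\<in>row_sum_mats n r. \<Prod>i<n. X (i, a i)) / real (card (row_sum_mats n r)) =
   (\<Prod>i<n. real (r i) / real n)"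
proof -
  have "(\<Sum>X\<in>row_sum_mats n r. \<Prod>i<n. X (i, a i)) = (\<Sum>X\<in>row_sum_mats n r. \<Prod>i<n. X (i, a i) * X (i, a i))"
  proof (intro sum.cong prod.cong refl)
    fix X i assume "X \<in> row_sum_mats n r"
    then have "X (i, a i) = 0 \<or> X (i, a i) = 1" unfolding row_sum_mats_def by auto
    then show "X (i, a i) = X (i, a i) * X (i, a i)" by auto
  qed
  then show ?thesis using X_moment[of n r a a] r a by simp
qed

lemma row_delta2:
  fixes h :: "nat \<Rightarrow> nat \<Rightarrow> real"
  assumes "a < n" "b < n" "\<And>j. h j 0 = 1"
  shows "(\<Prod>j<n. h j ((if j = a then 1 else 0) + (if j = b then 1 else 0))) =
     (if a = b then h a 2 else h a 1 * h b 1)"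
proof (cases "a = b")
  case True
  have "(\<Prod>j<n. h j ((if j = a then 1 else 0) + (if j = b then 1 else 0))) = (\<Prod>j<n. if j = a then h j 2 else 1)"
    using True assms by (intro prod.cong) (auto simp: numeral_2_eq_2)
  then show ?thesis using True assms by (simp add: prod.delta)
next
  case False
  have "(\<Prod>j<n. h j ((if j = a then 1 else 0) + (if j = b then 1 else 0))) =
      (\<Prod>j<n. (if j = a then h j 1 else 1) * (if j = b then h j 1 else 1))"
    using False assms by (intro prod.cong) auto
  then show ?thesis using False assms by (simp add: prod.distrib prod.delta)
qed

lemma row_delta1:
  fixes h :: "nat \<Rightarrow> nat \<Rightarrow> real"
  assumes "a < n" "\<And>j. h j 0 = 1"
  shows "(\<Prod>j<n. h j (if j = a then 1 else 0)) = h a 1"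
proof -
  have "(\<Prod>j<n. h j (if j = a then 1 else 0)) = (\<Prod>j<n. if j = a then h j 1 else 1)"
    using assms by (intro prod.cong) auto
  then show ?thesis using assms by (simp add: prod.delta)
qed

lemma Z_moment:
  fixes D :: "real measure" and m :: "'i \<Rightarrow> nat"
  assumes P: "prob_space D" and S: "sets D = sets borel" and sq: "integrable D (\<lambda>x. x ^ 2)"
    and m: "\<And>p. p \<in> I \<Longrightarrow> m p \<le> 2" and I: "finite I"
  shows "integrable (PiM I (\<lambda>_. D)) (\<lambda>z. \<Prod>p\<in>I. z p ^ m p)"
    and "(\<integral>z. (\<Prod>p\<in>I. z p ^ m p) \<partial>PiM I (\<lambda>_. D)) = (\<Prod>p\<in>I. \<integral>x. x ^ m p \<partial>D)"
proof -
  interpret prob_space D by fact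
  interpret product_sigma_finite "\<lambda>_. D"
    by (simp add: product_sigma_finite_def sigma_finite_measure_axioms)
  have mid: "(\<lambda>x. x) \<in> borel_measurable D" using S by (simp add: measurable_ident_sets)
  have i1: "integrable D (\<lambda>x. x)"
    by (rule square_integrable_imp_integrable[OF mid sq])
  have ik: "integrable D (\<lambda>x. x ^ k)" if "k \<le> 2" for k
  proof -
    have "k = 0 \<or> k = 1 \<or> k = 2" using that by auto
    then show ?thesis using i1 sq by auto
  qed
  show "integrable (PiM I (\<lambda>_. D)) (\<lambda>z. \<Prod>p\<in>I. z p ^ m p)"
    by (rule product_integrable_prod[OF I, of "\<lambda>p x. x ^ m p", simplified]) (use ik m in auto)
  show "(\<integral>z. (\<Prod>p\<in>I. z p ^ m p) \<partial>PiM I (\<lambda>_. D)) = (\<Prod>p\<in>I. \<integral>x. x ^ m p \<partial>D)"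
    by (rule product_integral_prod[OF I, of "\<lambda>p x. x ^ m p", simplified]) (use ik m in auto)
qed

lemma pair_moment:
  fixes p :: "'a pmf" and M :: "'b measure" and f :: "'a \<Rightarrow> real" and g :: "'b \<Rightarrow> real"
  assumes P: "prob_space M" and g: "integrable M g" and fin: "finite (set_pmf p)"
  shows "integrable (measure_pmf p \<Otimes>\<^sub>M M) (\<lambda>\<omega>. f (fst \<omega>) * g (snd \<omega>))"
    and "(\<integral>\<omega>. f (fst \<omega>) * g (snd \<omega>) \<partial>(measure_pmf p \<Otimes>\<^sub>M M)) = (\<integral>x. f x \<partial>p) * (\<integral>y. g y \<partial>M)"
proof -
  interpret M: prob_space M by fact
  interpret pair_sigma_finite "measure_pmf p" M
    by (simp add: pair_sigma_finite_def M.sigma_finite_measure_axioms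
        measure_pmf.sigma_finite_measure_axioms)
  have gm[measurable]: "g \<in> borel_measurable M" using g by auto
  have fm[measurable]: "f \<in> borel_measurable (measure_pmf p)" by simp
  show int: "integrable (measure_pmf p \<Otimes>\<^sub>M M) (\<lambda>\<omega>. f (fst \<omega>) * g (snd \<omega>))"
  proof (rule Fubini_integrable)
    show "(\<lambda>\<omega>. f (fst \<omega>) * g (snd \<omega>)) \<in> borel_measurable (measure_pmf p \<Otimes>\<^sub>M M)"
      by measurable
    show "integrable (measure_pmf p) (\<lambda>x. \<integral>y. norm (f (fst (x, y)) * g (snd (x, y))) \<partial>M)"
      by (rule integrable_measure_pmf_finite[OF fin])
    show "AE x in measure_pmf p. integrable M (\<lambda>y. f (fst (x, y)) * g (snd (x, y)))"
      using g by simp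
  qed
  have "(\<integral>\<omega>. f (fst \<omega>) * g (snd \<omega>) \<partial>(measure_pmf p \<Otimes>\<^sub>M M)) =
      (\<integral>x. (\<integral>y. f x * g y \<partial>M) \<partial>p)"
    using integral_fst'[OF int] by simp
  also have "\<dots> = (\<integral>x. f x * (\<integral>y. g y \<partial>M) \<partial>p)" by simp
  also have "\<dots> = (\<integral>x. f x \<partial>p) * (\<integral>y. g y \<partial>M)" by simp
  finally show "(\<integral>\<omega>. f (fst \<omega>) * g (snd \<omega>) \<partial>(measure_pmf p \<Otimes>\<^sub>M M)) = (\<integral>x. f x \<partial>p) * (\<integral>y. g y \<partial>M)" .
qed

definition m1 :: "(nat \<Rightarrow> nat) \<Rightarrow> nat \<times> nat \<Rightarrow> nat" where
  "m1 \<sigma> p = (if snd p = \<sigma> (fst p) then 1 else 0)"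
definition mm :: "(nat \<Rightarrow> nat) \<Rightarrow> (nat \<Rightarrow> nat) \<Rightarrow> nat \<times> nat \<Rightarrow> nat" where
  "mm \<sigma> \<tau> p = (if snd p = \<sigma> (fst p) then 1 else 0) + (if snd p = \<tau> (fst p) then 1 else 0)"

lemma prod_grid: "(\<Prod>p\<in>{..<n}\<times>{..<n}. f p) = (\<Prod>i<n. \<Prod>j<n. f (i, j :: nat))"
  by (simp add: prod.cartesian_product)

lemma gZ1:
  assumes "\<And>i. i < n \<Longrightarrow> \<sigma> i < n"
  shows "(\<Prod>i<n. z (i, \<sigma> i)) = (\<Prod>p\<in>{..<n}\<times>{..<n}. (z p :: real) ^ m1 \<sigma> p)"
  unfolding prod_grid m1_def
proof (rule prod.cong[OF refl])
  fix i assume "i \<in> {..<n}"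
  then have "(\<Prod>j<n. z (i, j) ^ (if j = \<sigma> i then 1 else 0)) = z (i, \<sigma> i) ^ 1"
    using assms by (intro row_delta1[where h="\<lambda>j k. z (i, j) ^ k"]) auto
  then show "z (i, \<sigma> i) = (\<Prod>j<n. z (i, j) ^ (if snd (i, j) = \<sigma> (fst (i, j)) then 1 else 0))" by simp
qed

lemma gZ2:
  assumes "\<And>i. i < n \<Longrightarrow> \<sigma> i < n" "\<And>i. i < n \<Longrightarrow> \<tau> i < n"
  shows "(\<Prod>i<n. z (i, \<sigma> i)) * (\<Prod>i<n. z (i, \<tau> i)) = (\<Prod>p\<in>{..<n}\<times>{..<n}. (z p :: real) ^ mm \<sigma> \<tau> p)"
  unfolding prod_grid mm_def prod.distrib[symmetric]
proof (rule prod.cong[OF refl])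
  fix i assume "i \<in> {..<n}"
  then have "(\<Prod>j<n. z (i, j) ^ ((if j = \<sigma> i then 1 else 0) + (if j = \<tau> i then 1 else 0))) =
     (if \<sigma> i = \<tau> i then z (i, \<sigma> i) ^ 2 else z (i, \<sigma> i) ^ 1 * z (i, \<tau> i) ^ 1)"
    using assms by (intro row_delta2[where h="\<lambda>j k. z (i, j) ^ k"]) auto
  then show "z (i, \<sigma> i) * z (i, \<tau> i) = (\<Prod>j<n. z (i, j) ^ ((if snd (i, j) = \<sigma> (fst (i, j)) then 1 else 0)
     + (if snd (i, j) = \<tau> (fst (i, j)) then 1 else 0)))" by (auto simp: power2_eq_square)
qed

lemma EZ:
  fixes D :: "real measure"
  assumes P: "prob_space D" and S: "sets D = sets borel" and sq: "integrable D (\<lambda>x. x ^ 2)"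
    and \<sigma>: "\<And>i. i < n \<Longrightarrow> \<sigma> i < n" and \<tau>: "\<And>i. i < n \<Longrightarrow> \<tau> i < n"
  shows "integrable (PiM ({..<n}\<times>{..<n}) (\<lambda>_. D)) (\<lambda>z. \<Prod>i<n. z (i, \<sigma> i))"
    and "(\<integral>z. (\<Prod>i<n. z (i, \<sigma> i)) \<partial>PiM ({..<n}\<times>{..<n}) (\<lambda>_. D)) = (\<integral>x. x \<partial>D) ^ n"
    and "integrable (PiM ({..<n}\<times>{..<n}) (\<lambda>_. D)) (\<lambda>z. (\<Prod>i<n. z (i, \<sigma> i)) * (\<Prod>i<n. z (i, \<tau> i)))"
    and "(\<integral>z. (\<Prod>i<n. z (i, \<sigma> i)) * (\<Prod>i<n. z (i, \<tau> i)) \<partial>PiM ({..<n}\<times>{..<n}) (\<lambda>_. D)) =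
          (\<Prod>i<n. if \<sigma> i = \<tau> i then (\<integral>x. x ^ 2 \<partial>D) else (\<integral>x. x \<partial>D) * (\<integral>x. x \<partial>D))"
proof -
  interpret prob_space D by fact
  define e where "e k = (\<integral>x. x ^ k \<partial>D)" for k :: nat
  have e0: "e 0 = 1" unfolding e_def by (simp add: prob_space)
  have eq1: "(\<lambda>z. \<Prod>i<n. z (i, \<sigma> i)) = (\<lambda>z. \<Prod>p\<in>{..<n}\<times>{..<n}. (z p :: real) ^ m1 \<sigma> p)"
    by (rule ext) (rule gZ1[OF \<sigma>])
  have eq2: "(\<lambda>z. (\<Prod>i<n. z (i, \<sigma> i)) * (\<Prod>i<n. z (i, \<tau> i))) = (\<lambda>z. \<Prod>p\<in>{..<n}\<times>{..<n}. (z p :: real) ^ mm \<sigma> \<tau> p)"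
    by (rule ext) (rule gZ2[OF \<sigma> \<tau>])
  have m1b: "\<And>p. m1 \<sigma> p \<le> 2" by (simp add: m1_def)
  have mmb: "\<And>p. mm \<sigma> \<tau> p \<le> 2" by (simp add: mm_def)
  show "integrable (PiM ({..<n}\<times>{..<n}) (\<lambda>_. D)) (\<lambda>z. \<Prod>i<n. z (i, \<sigma> i))"
    unfolding eq1 by (rule Z_moment(1)[OF P S sq]) (auto simp: m1b)
  have "(\<integral>z. (\<Prod>i<n. z (i, \<sigma> i)) \<partial>PiM ({..<n}\<times>{..<n}) (\<lambda>_. D)) = (\<Prod>p\<in>{..<n}\<times>{..<n}. e (m1 \<sigma> p))"
    unfolding eq1 e_def by (rule Z_moment(2)[OF P S sq]) (auto simp: m1b)
  also have "\<dots> = (\<Prod>i<n. e 1)"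
    unfolding prod_grid m1_def
  proof (rule prod.cong[OF refl])
    fix i assume "i \<in> {..<n}"
    then show "(\<Prod>j<n. e (if snd (i, j) = \<sigma> (fst (i, j)) then 1 else 0)) = e 1"
      using row_delta1[where h="\<lambda>j k. e k" and a="\<sigma> i" and n=n] \<sigma> e0 by auto
  qed
  finally show "(\<integral>z. (\<Prod>i<n. z (i, \<sigma> i)) \<partial>PiM ({..<n}\<times>{..<n}) (\<lambda>_. D)) = (\<integral>x. x \<partial>D) ^ n"
    by (simp add: e_def)
  show "integrable (PiM ({..<n}\<times>{..<n}) (\<lambda>_. D)) (\<lambda>z. (\<Prod>i<n. z (i, \<sigma> i)) * (\<Prod>i<n. z (i, \<tau> i)))"
    unfolding eq2 by (rule Z_moment(1)[OF P S sq]) (auto simp: mmb)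
  have "(\<integral>z. (\<Prod>i<n. z (i, \<sigma> i)) * (\<Prod>i<n. z (i, \<tau> i)) \<partial>PiM ({..<n}\<times>{..<n}) (\<lambda>_. D)) =
      (\<Prod>p\<in>{..<n}\<times>{..<n}. e (mm \<sigma> \<tau> p))"
    unfolding eq2 e_def by (rule Z_moment(2)[OF P S sq]) (auto simp: mmb)
  also have "\<dots> = (\<Prod>i<n. if \<sigma> i = \<tau> i then e 2 else e 1 * e 1)"
    unfolding prod_grid mm_def
  proof (rule prod.cong[OF refl])
    fix i assume "i \<in> {..<n}"
    then show "(\<Prod>j<n. e ((if snd (i, j) = \<sigma> (fst (i, j)) then 1 else 0) + (if snd (i, j) = \<tau> (fst (i, j)) then 1 else 0)))
        = (if \<sigma> i = \<tau> i then e 2 else e 1 * e 1)"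
      using row_delta2[where h="\<lambda>j k. e k" and a="\<sigma> i" and b="\<tau> i" and n=n] \<sigma> \<tau> e0 by auto
  qed
  finally show "(\<integral>z. (\<Prod>i<n. z (i, \<sigma> i)) * (\<Prod>i<n. z (i, \<tau> i)) \<partial>PiM ({..<n}\<times>{..<n}) (\<lambda>_. D)) =
          (\<Prod>i<n. if \<sigma> i = \<tau> i then (\<integral>x. x ^ 2 \<partial>D) else (\<integral>x. x \<partial>D) * (\<integral>x. x \<partial>D))"
    by (simp only: e_def power_one_right)
qed

lemma moments:
  fixes D :: "real measure" and r :: "nat \<Rightarrow> nat" and n :: nat
  assumes n: "n \<ge> 1" and P: "prob_space D" and S: "sets D = sets borel"
    and sq: "integrable D (\<lambda>x. x ^ 2)"
    and r: "\<And>i. i < n \<Longrightarrow> 1 \<le> r i \<and> r i \<le> n"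
  shows "integrable (joint_space n r D) (Tn n)"
    and "(\<integral>\<omega>. Tn n \<omega> \<partial>joint_space n r D) = fact n * (\<Prod>i<n. real (r i) / real n) * (\<integral>x. x \<partial>D) ^ n"
    and "integrable (joint_space n r D) (\<lambda>\<omega>. Tn n \<omega> ^ 2)"
    and "(\<integral>\<omega>. Tn n \<omega> ^ 2 \<partial>joint_space n r D) =
      (\<Sum>\<sigma>\<in>{\<sigma>. \<sigma> permutes {..<n}}. \<Sum>\<tau>\<in>{\<sigma>. \<sigma> permutes {..<n}}. \<Prod>i<n.
         if \<sigma> i = \<tau> i then real (r i) / real n * (\<integral>x. x ^ 2 \<partial>D)
         else real (r i) * (real (r i) - 1) / (real n * (real n - 1)) * ((\<integral>x. x \<partial>D) * (\<integral>x. x \<partial>D)))"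
proof -
  define PP where "PP = {\<sigma>. \<sigma> permutes {..<n::nat}}"
  define M where "M = row_sum_mats n r"
  define Q where "Q = PiM ({..<n}\<times>{..<n}) (\<lambda>_::nat\<times>nat. D)"
  define fX where "fX \<sigma> X = (\<Prod>i<n. (X::nat\<times>nat\<Rightarrow>real) (i, \<sigma> i))" for \<sigma> :: "nat \<Rightarrow> nat" and X
  have finPP: "finite PP" unfolding PP_def by (rule finite_permutations) simp
  have cardPP: "card PP = fact n" unfolding PP_def by (rule card_permutations) auto
  have PPlt: "\<And>\<sigma> i. \<sigma> \<in> PP \<Longrightarrow> i < n \<Longrightarrow> \<sigma> i < n"
    unfolding PP_def using permutes_in_image by fastforce
  have finM: "finite M" unfolding M_def by (rule finite_rsm)
  have "card M \<noteq> 0" unfolding M_def card_rsm using r by (auto simp: prod_zero_iff) (meson not_le)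
  then have neM: "M \<noteq> {}" by auto
  have setp: "set_pmf (pmf_of_set M) = M" using finM neM by simp
  have J: "joint_space n r D = measure_pmf (pmf_of_set M) \<Otimes>\<^sub>M Q"
    unfolding joint_space_def M_def Q_def ..
  have finp: "finite (set_pmf (pmf_of_set M))" using setp finM by simp
  have PQ: "prob_space Q" unfolding Q_def by (intro prob_space_PiM) (use P in auto)
  have T1: "Tn n \<omega> = (\<Sum>\<sigma>\<in>PP. fX \<sigma> (fst \<omega>) * fX \<sigma> (snd \<omega>))" for \<omega>
    unfolding Tn_def per_def PP_def fX_def by (simp add: prod.distrib)
  have T2: "Tn n \<omega> ^ 2 = (\<Sum>\<sigma>\<in>PP. \<Sum>\<tau>\<in>PP. (fX \<sigma> (fst \<omega>) * fX \<tau> (fst \<omega>)) * (fX \<sigma> (snd \<omega>) * fX \<tau> (snd \<omega>)))" for \<omega>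
    unfolding T1 power2_eq_square sum_product by (simp add: ac_simps)
  have iZ1: "integrable Q (fX \<sigma>)" and eZ1: "(\<integral>z. fX \<sigma> z \<partial>Q) = (\<integral>x. x \<partial>D) ^ n" if "\<sigma> \<in> PP" for \<sigma>
    using EZ(1,2)[OF P S sq, of n \<sigma> \<sigma>] PPlt[OF that] unfolding Q_def fX_def by auto
  have iZ2: "integrable Q (\<lambda>z. fX \<sigma> z * fX \<tau> z)"
    and eZ2: "(\<integral>z. fX \<sigma> z * fX \<tau> z \<partial>Q) = (\<Prod>i<n. if \<sigma> i = \<tau> i then (\<integral>x. x ^ 2 \<partial>D) else (\<integral>x. x \<partial>D) * (\<integral>x. x \<partial>D))"
    if "\<sigma> \<in> PP" "\<tau> \<in> PP" for \<sigma> \<tau>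
    using EZ(3,4)[OF P S sq, of n \<sigma> \<tau>] PPlt[OF that(1)] PPlt[OF that(2)] unfolding Q_def fX_def by auto
  have eX1: "(\<integral>X. fX \<sigma> X \<partial>pmf_of_set M) = (\<Prod>i<n. real (r i) / real n)" if "\<sigma> \<in> PP" for \<sigma>
    unfolding integral_pmf_of_set[OF neM finM] unfolding M_def fX_def
    by (rule X_moment1) (use r PPlt[OF that] in auto)
  have eX2: "(\<integral>X. fX \<sigma> X * fX \<tau> X \<partial>pmf_of_set M) = (\<Prod>i<n. if \<sigma> i = \<tau> i then real (r i) / real n
       else real (r i) * (real (r i) - 1) / (real n * (real n - 1)))" if "\<sigma> \<in> PP" "\<tau> \<in> PP" for \<sigma> \<tau>
    unfolding integral_pmf_of_set[OF neM finM] unfolding M_def fX_def prod.distrib[symmetric]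
    by (rule X_moment) (use r PPlt[OF that(1)] PPlt[OF that(2)] in auto)
  show int1: "integrable (joint_space n r D) (Tn n)"
    unfolding J T1 by (rule Bochner_Integration.integrable_sum) (auto intro!: pair_moment(1)[OF PQ iZ1 finp])
  have "(\<integral>\<omega>. Tn n \<omega> \<partial>joint_space n r D) = (\<Sum>\<sigma>\<in>PP. \<integral>\<omega>. fX \<sigma> (fst \<omega>) * fX \<sigma> (snd \<omega>) \<partial>joint_space n r D)"
    unfolding T1 J by (rule Bochner_Integration.integral_sum) (auto intro!: pair_moment(1)[OF PQ iZ1 finp])
  also have "\<dots> = (\<Sum>\<sigma>\<in>PP. (\<Prod>i<n. real (r i) / real n) * (\<integral>x. x \<partial>D) ^ n)"
    unfolding J by (intro sum.cong refl) (simp add: pair_moment(2)[OF PQ iZ1 finp] eX1 eZ1)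
  also have "\<dots> = fact n * (\<Prod>i<n. real (r i) / real n) * (\<integral>x. x \<partial>D) ^ n"
    by (simp add: cardPP)
  finally show "(\<integral>\<omega>. Tn n \<omega> \<partial>joint_space n r D) = fact n * (\<Prod>i<n. real (r i) / real n) * (\<integral>x. x \<partial>D) ^ n" .
  show "integrable (joint_space n r D) (\<lambda>\<omega>. Tn n \<omega> ^ 2)"
    unfolding J T2 by (intro Bochner_Integration.integrable_sum) (auto intro!: pair_moment(1)[OF PQ iZ2 finp])
  have "(\<integral>\<omega>. Tn n \<omega> ^ 2 \<partial>joint_space n r D) = (\<Sum>\<sigma>\<in>PP. \<Sum>\<tau>\<in>PP.
      \<integral>\<omega>. (fX \<sigma> (fst \<omega>) * fX \<tau> (fst \<omega>)) * (fX \<sigma> (snd \<omega>) * fX \<tau> (snd \<omega>)) \<partial>joint_space n r D)"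
    unfolding T2 J
    by (subst Bochner_Integration.integral_sum, (intro Bochner_Integration.integrable_sum; auto intro!: pair_moment(1)[OF PQ iZ2 finp]),
       intro sum.cong refl Bochner_Integration.integral_sum; auto intro!: pair_moment(1)[OF PQ iZ2 finp])
  also have "\<dots> = (\<Sum>\<sigma>\<in>PP. \<Sum>\<tau>\<in>PP. (\<Prod>i<n. if \<sigma> i = \<tau> i then real (r i) / real n
       else real (r i) * (real (r i) - 1) / (real n * (real n - 1))) *
       (\<Prod>i<n. if \<sigma> i = \<tau> i then (\<integral>x. x ^ 2 \<partial>D) else (\<integral>x. x \<partial>D) * (\<integral>x. x \<partial>D)))"
  proof (intro sum.cong refl)
    fix \<sigma> \<tau> assume st: "\<sigma> \<in> PP" "\<tau> \<in> PP"
    show "(\<integral>\<omega>. (fX \<sigma> (fst \<omega>) * fX \<tau> (fst \<omega>)) * (fX \<sigma> (snd \<omega>) * fX \<tau> (snd \<omega>)) \<partial>joint_space n r D) =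
       (\<Prod>i<n. if \<sigma> i = \<tau> i then real (r i) / real n
       else real (r i) * (real (r i) - 1) / (real n * (real n - 1))) *
       (\<Prod>i<n. if \<sigma> i = \<tau> i then (\<integral>x. x ^ 2 \<partial>D) else (\<integral>x. x \<partial>D) * (\<integral>x. x \<partial>D))"
      unfolding J pair_moment(2)[OF PQ iZ2[OF st] finp, of "\<lambda>X. fX \<sigma> X * fX \<tau> X"]
      by (simp only: eX2[OF st] eZ2[OF st])
  qed
  also have "\<dots> = (\<Sum>\<sigma>\<in>PP. \<Sum>\<tau>\<in>PP. \<Prod>i<n.
         if \<sigma> i = \<tau> i then real (r i) / real n * (\<integral>x. x ^ 2 \<partial>D)
         else real (r i) * (real (r i) - 1) / (real n * (real n - 1)) * ((\<integral>x. x \<partial>D) * (\<integral>x. x \<partial>D)))"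
    unfolding prod.distrib[symmetric] by (intro sum.cong prod.cong refl) auto
  finally show "(\<integral>\<omega>. Tn n \<omega> ^ 2 \<partial>joint_space n r D) =
      (\<Sum>\<sigma>\<in>{\<sigma>. \<sigma> permutes {..<n}}. \<Sum>\<tau>\<in>{\<sigma>. \<sigma> permutes {..<n}}. \<Prod>i<n.
         if \<sigma> i = \<tau> i then real (r i) / real n * (\<integral>x. x ^ 2 \<partial>D)
         else real (r i) * (real (r i) - 1) / (real n * (real n - 1)) * ((\<integral>x. x \<partial>D) * (\<integral>x. x \<partial>D)))"
    unfolding PP_def .
qed

lemma double_perm_sum:
  fixes A B :: real
  shows "(\<Sum>\<sigma>\<in>{\<sigma>. \<sigma> permutes {..<n}}. \<Sum>\<tau>\<in>{\<sigma>. \<sigma> permutes {..<n}}. \<Prod>i<n. if \<sigma> i = \<tau> i then A else B)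
    = fact n * (\<Sum>\<rho>\<in>{\<sigma>. \<sigma> permutes {..<n}}. \<Prod>i<n. if \<rho> i = i then A else B)"
proof -
  have "(\<Sum>\<tau>\<in>{\<sigma>. \<sigma> permutes {..<n}}. \<Prod>i<n. if \<sigma> i = \<tau> i then A else B) =
      (\<Sum>\<rho>\<in>{\<sigma>. \<sigma> permutes {..<n}}. \<Prod>i<n. if \<rho> i = i then A else B)"
    if s: "\<sigma> permutes {..<n}" for \<sigma>
  proof -
    have "(\<Sum>\<tau>\<in>{\<sigma>. \<sigma> permutes {..<n}}. \<Prod>i<n. if \<sigma> i = \<tau> i then A else B) =
      (\<Sum>\<rho>\<in>{\<sigma>. \<sigma> permutes {..<n}}. \<Prod>i<n. if \<sigma> i = (\<sigma> \<circ> \<rho>) i then A else B)"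
      by (rule setum_permutations_compose_left[OF s])
    also have "\<dots> = (\<Sum>\<rho>\<in>{\<sigma>. \<sigma> permutes {..<n}}. \<Prod>i<n. if \<rho> i = i then A else B)"
    proof (intro sum.cong prod.cong refl)
      fix \<rho> i
      have "\<sigma> i = \<sigma> (\<rho> i) \<longleftrightarrow> \<rho> i = i" using permutes_inj[OF s] unfolding inj_def by metis
      then show "(if \<sigma> i = (\<sigma> \<circ> \<rho>) i then A else B) = (if \<rho> i = i then A else B)" by simp
    qed
    finally show ?thesis .
  qed
  note H = this
  have cP: "card {\<sigma>. \<sigma> permutes {..<n}} = fact n" by (rule card_permutations) auto
  have "(\<Sum>\<sigma>\<in>{\<sigma>. \<sigma> permutes {..<n}}. \<Sum>\<tau>\<in>{\<sigma>. \<sigma> permutes {..<n}}. \<Prod>i<n. if \<sigma> i = \<tau> i then A else B)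
    = (\<Sum>\<sigma>\<in>{\<sigma>. \<sigma> permutes {..<n}}. (\<Sum>\<rho>\<in>{\<sigma>. \<sigma> permutes {..<n}}. \<Prod>i<n. if \<rho> i = i then A else B))"
    by (rule sum.cong[OF refl]) (rule H, simp)
  also have "\<dots> = fact n * (\<Sum>\<rho>\<in>{\<sigma>. \<sigma> permutes {..<n}}. \<Prod>i<n. if \<rho> i = i then A else B)"
    by (simp only: sum_constant cP of_nat_fact)
  finally show ?thesis .
qed

lemma ratio_bound:
  fixes n :: nat and r :: "nat \<Rightarrow> nat" and \<nu> \<delta> :: real and rl ru :: nat
  assumes n: "n \<ge> 2" and \<nu>: "\<nu> > 0" and \<delta>: "\<delta> \<ge> \<nu>\<^sup>2"
    and r: "\<And>i. i < n \<Longrightarrow> rl \<le> r i \<and> r i \<le> ru" and rl: "rl \<ge> 1" and ru: "ru \<ge> 2" "ru \<le> n"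
  shows "(\<Sum>\<sigma>\<in>{\<sigma>. \<sigma> permutes {..<n}}. \<Sum>\<tau>\<in>{\<sigma>. \<sigma> permutes {..<n}}. \<Prod>i<n.
         if \<sigma> i = \<tau> i then real (r i) / real n * \<delta>
         else real (r i) * (real (r i) - 1) / (real n * (real n - 1)) * (\<nu> * \<nu>))
      / (fact n * (\<Prod>i<n. real (r i) / real n) * \<nu> ^ n)\<^sup>2
    \<le> ((1 - 1 / real ru) * real n / (real n - 1)) ^ n *
       exp ((real n * \<delta> / (\<nu>\<^sup>2 * real rl) - (1 - 1 / real ru) * real n / (real n - 1))
            / ((1 - 1 / real ru) * real n / (real n - 1)))"
proof -
  define A where "A = real n * \<delta> / (\<nu>\<^sup>2 * real rl)"
  define B where "B = (1 - 1 / real ru) * real n / (real n - 1)"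
  define PP where "PP = {\<sigma>. \<sigma> permutes {..<n::nat}}"
  define q where "q i = real (r i) * \<nu> / real n" for i
  define c where "c i t = (if t then real n * \<delta> / (real (r i) * \<nu>\<^sup>2)
      else (real (r i) - 1) * real n / (real (r i) * (real n - 1)))" for i t
  have \<delta>0: "\<delta> \<ge> 0" using \<delta> zero_le_power2[of \<nu>] by linarith
  have rpos: "real (r i) \<ge> 1" if "i < n" for i using r[OF that] rl by simp
  have qpos: "q i > 0" if "i < n" for i using rpos[OF that] \<nu> n unfolding q_def by simp
  have trm: "(if \<sigma> i = \<tau> i then real (r i) / real n * \<delta>
         else real (r i) * (real (r i) - 1) / (real n * (real n - 1)) * (\<nu> * \<nu>)) =
      (q i)\<^sup>2 * c i (\<sigma> i = \<tau> i)" if "i < n" for \<sigma> \<tau> :: "nat \<Rightarrow> nat" and i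
  proof (cases "\<sigma> i = \<tau> i")
    case True
    have "(real (r i) * \<nu> / real n)\<^sup>2 * (real n * \<delta> / (real (r i) * \<nu>\<^sup>2)) = real (r i) / real n * \<delta>"
      using rpos[OF that] \<nu> n by (simp add: power2_eq_square field_simps)
    then show ?thesis using True unfolding q_def c_def by simp
  next
    case False
    have nn: "real n - 1 \<noteq> 0" using n by simp
    have "(real (r i) * \<nu> / real n)\<^sup>2 * ((real (r i) - 1) * real n / (real (r i) * (real n - 1))) =
       real (r i) * (real (r i) - 1) / (real n * (real n - 1)) * (\<nu> * \<nu>)"
      using rpos[OF that] \<nu> n nn by (simp add: power2_eq_square field_simps)
    then show ?thesis using False unfolding q_def c_def by simp
  qed
  have B1: "B \<le> 1" and B0: "0 < B"
  proof -
    have "real n \<ge> real ru" using ru by simp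
    then have "real n / real ru \<ge> 1" using ru by simp
    then have "(1 - 1 / real ru) * real n \<le> real n - 1" by (simp add: algebra_simps)
    then show "B \<le> 1" unfolding B_def using n by simp
    have "1 - 1 / real ru > 0" using ru by simp
    then show "0 < B" unfolding B_def using n by simp
  qed
  have A1: "A \<ge> 1"
  proof -
    have "rl \<le> n" using r[of 0] ru n by simp
    have "\<delta> / \<nu>\<^sup>2 \<ge> 1" using \<delta> \<nu> by simp
    moreover have "real n / real rl \<ge> 1" using \<open>rl \<le> n\<close> rl by simp
    ultimately have "(\<delta> / \<nu>\<^sup>2) * (real n / real rl) \<ge> 1" using mult_mono[of 1 "\<delta> / \<nu>\<^sup>2" 1 "real n / real rl"] by simp
    then show ?thesis unfolding A_def by (simp add: field_simps)
  qed
  have cA: "c i True \<le> A" and cB: "c i False \<le> B" and c0: "0 \<le> c i t" if "i < n" for i t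
  proof -
    have "real n * \<delta> / (real (r i) * \<nu>\<^sup>2) \<le> real n * \<delta> / (real rl * \<nu>\<^sup>2)"
      using r[OF that] rl \<nu> \<delta>0 n by (intro divide_left_mono mult_right_mono mult_pos_pos) auto
    then show "c i True \<le> A" unfolding c_def A_def by (simp add: mult.commute)
    have "(real (r i) - 1) / real (r i) \<le> 1 - 1 / real ru"
      using r[OF that] rpos[OF that] ru by (simp add: field_simps)
    then have "(real (r i) - 1) / real (r i) * (real n / (real n - 1)) \<le> (1 - 1 / real ru) * (real n / (real n - 1))"
      using n by (intro mult_right_mono) auto
    then show "c i False \<le> B" unfolding c_def B_def by (simp add: field_simps)
    show "0 \<le> c i t" unfolding c_def using rpos[OF that] n \<delta>0 by (auto intro!: divide_nonneg_nonneg mult_nonneg_nonneg)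
  qed
  have E2: "(\<Sum>\<sigma>\<in>PP. \<Sum>\<tau>\<in>PP. \<Prod>i<n.
         if \<sigma> i = \<tau> i then real (r i) / real n * \<delta>
         else real (r i) * (real (r i) - 1) / (real n * (real n - 1)) * (\<nu> * \<nu>))
      = (\<Prod>i<n. (q i)\<^sup>2) * (\<Sum>\<sigma>\<in>PP. \<Sum>\<tau>\<in>PP. \<Prod>i<n. c i (\<sigma> i = \<tau> i))"
  proof -
    have rowp: "(\<Prod>i<n. if \<sigma> i = \<tau> i then real (r i) / real n * \<delta>
         else real (r i) * (real (r i) - 1) / (real n * (real n - 1)) * (\<nu> * \<nu>)) =
       (\<Prod>i<n. (q i)\<^sup>2) * (\<Prod>i<n. c i (\<sigma> i = \<tau> i))" for \<sigma> \<tau> :: "nat \<Rightarrow> nat"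
      unfolding prod.distrib[symmetric] by (rule prod.cong[OF refl]) (rule trm, simp)
    show ?thesis by (simp only: rowp sum_distrib_left)
  qed
  have "(\<Sum>\<sigma>\<in>PP. \<Sum>\<tau>\<in>PP. \<Prod>i<n. c i (\<sigma> i = \<tau> i)) \<le> (\<Sum>\<sigma>\<in>PP. \<Sum>\<tau>\<in>PP. \<Prod>i<n. if \<sigma> i = \<tau> i then A else B)"
    by (intro sum_mono prod_mono conjI) (simp_all add: c0 cA cB)
  also have "\<dots> = fact n * (\<Sum>\<rho>\<in>PP. \<Prod>i<n. if \<rho> i = i then A else B)"
    unfolding PP_def by (rule double_perm_sum)
  also have "\<dots> \<le> fact n * (fact n * B ^ n * exp ((A - B) / B))"
    unfolding PP_def using B0 B1 A1 by (intro mult_left_mono perm_fix_sum) auto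
  finally have S: "(\<Sum>\<sigma>\<in>PP. \<Sum>\<tau>\<in>PP. \<Prod>i<n. c i (\<sigma> i = \<tau> i)) \<le> fact n * (fact n * B ^ n * exp ((A - B) / B))" .
  have mu: "fact n * (\<Prod>i<n. real (r i) / real n) * \<nu> ^ n = fact n * (\<Prod>i<n. q i)"
  proof -
    have "(\<Prod>i<n. real (r i) / real n) * \<nu> ^ n = (\<Prod>i<n. real (r i) / real n * \<nu>)"
      by (simp only: prod.distrib prod_constant card_lessThan)
    also have "\<dots> = (\<Prod>i<n. q i)" unfolding q_def by (intro prod.cong) auto
    finally show ?thesis by (simp add: mult.assoc)
  qed
  have qP: "(\<Prod>i<n. q i) > 0" using qpos by (intro prod_pos) auto
  have "(\<Prod>i<n. (q i)\<^sup>2) * (\<Sum>\<sigma>\<in>PP. \<Sum>\<tau>\<in>PP. \<Prod>i<n. c i (\<sigma> i = \<tau> i)) / (fact n * (\<Prod>i<n. q i))\<^sup>2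
     \<le> (\<Prod>i<n. (q i)\<^sup>2) * (fact n * (fact n * B ^ n * exp ((A - B) / B))) / (fact n * (\<Prod>i<n. q i))\<^sup>2"
    using S qP by (intro divide_right_mono mult_left_mono) (auto intro: prod_nonneg)
  also have "\<dots> = B ^ n * exp ((A - B) / B)"
  proof -
    have pq: "(\<Prod>i<n. (q i)\<^sup>2) = (\<Prod>i<n. q i)\<^sup>2" by (simp add: prod_power_distrib)
    have f0: "fact n \<noteq> (0::real)" by simp
    have gen: "Q\<^sup>2 * (F * (F * Y * Z)) / (F * Q)\<^sup>2 = Y * Z" if "Q \<noteq> 0" "F \<noteq> 0" for Q F Y Z :: real
      using that by (simp add: power2_eq_square field_simps)
    show ?thesis unfolding pq using qP f0 by (intro gen) (linarith, assumption)
  qed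
  finally show ?thesis unfolding E2[unfolded PP_def] mu[symmetric] A_def B_def PP_def .
qed

lemma final_bound:
  fixes n :: nat and x y :: real
  assumes n: "n \<ge> 2" and x: "0 < x" "x < 1" and xy: "x \<le> y"
  shows "((1 - x) * real n / (real n - 1)) ^ n *
     exp ((real n * y - (1 - x) * real n / (real n - 1)) / ((1 - x) * real n / (real n - 1)))
   \<le> exp (real n * (y - x) + 1 / (real n - 1) + real n * y\<^sup>2 / (1 - x))"
proof -
  define B where "B = (1 - x) * real n / (real n - 1)"
  have n1: "real n - 1 > 0" using n by simp
  have B0: "B > 0" unfolding B_def using x n1 n by simp
  have e1: "1 - x \<le> exp (- x)" using exp_ge_add_one_self[of "-x"] by simp
  have e2: "real n / (real n - 1) \<le> exp (1 / (real n - 1))"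
  proof -
    have "real n / (real n - 1) = 1 + 1 / (real n - 1)" using n1 by (simp add: field_simps)
    then show ?thesis using exp_ge_add_one_self[of "1 / (real n - 1)"] by simp
  qed
  have "B = (1 - x) * (real n / (real n - 1))" unfolding B_def by simp
  also have "\<dots> \<le> exp (- x) * exp (1 / (real n - 1))"
    using e1 e2 x n1 by (intro mult_mono) auto
  also have "\<dots> = exp (- x + 1 / (real n - 1))" by (simp only: exp_add)
  finally have Bl: "B \<le> exp (- x + 1 / (real n - 1))" .
  have Bn: "B ^ n \<le> exp (real n * (- x + 1 / (real n - 1)))"
    unfolding exp_of_nat_mult using Bl B0 by (intro power_mono) auto
  have q: "(real n * y - B) / B = y * (real n - 1) / (1 - x) - 1"
  proof -
    have h1: "(real n * y - B) / B = real n * y / B - 1" using B0 by (simp add: diff_divide_distrib)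
    have nz: "1 - x \<noteq> 0" "real n - 1 \<noteq> 0" "real n \<noteq> 0" using x n1 n by auto
    have h2: "real n * y / B = y * (real n - 1) / (1 - x)" unfolding B_def using nz by (simp add: field_simps)
    show ?thesis using h1 h2 by simp
  qed
  have ex: "real n * (- x + 1 / (real n - 1)) + (y * (real n - 1) / (1 - x) - 1)
      \<le> real n * (y - x) + 1 / (real n - 1) + real n * y\<^sup>2 / (1 - x)"
  proof -
    have a: "real n * (1 / (real n - 1)) - 1 = 1 / (real n - 1)" using n1 by (simp add: field_simps)
    have "y * (real n - 1) \<le> real n * y * (1 - x) + real n * y\<^sup>2"
    proof -
      have "0 \<le> y + real n * y * (y - x)" using x xy by (intro add_nonneg_nonneg mult_nonneg_nonneg) auto
      then show ?thesis by (simp add: algebra_simps power2_eq_square)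
    qed
    then have "y * (real n - 1) / (1 - x) \<le> (real n * y * (1 - x) + real n * y\<^sup>2) / (1 - x)"
      using x by (intro divide_right_mono) auto
    also have "\<dots> = real n * y + real n * y\<^sup>2 / (1 - x)" using x by (simp add: field_simps)
    finally have "y * (real n - 1) / (1 - x) \<le> real n * y + real n * y\<^sup>2 / (1 - x)" .
    then show ?thesis using a by (simp add: algebra_simps)
  qed
  have "B ^ n * exp ((real n * y - B) / B) \<le> exp (real n * (- x + 1 / (real n - 1))) * exp (y * (real n - 1) / (1 - x) - 1)"
    unfolding q using Bn by (intro mult_right_mono) auto
  also have "\<dots> = exp (real n * (- x + 1 / (real n - 1)) + (y * (real n - 1) / (1 - x) - 1))"
    by (simp add: exp_add)
  also have "\<dots> \<le> exp (real n * (y - x) + 1 / (real n - 1) + real n * y\<^sup>2 / (1 - x))"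
    using ex by simp
  finally show ?thesis unfolding B_def .
qed

lemma sq_dev:
  fixes T :: "'a \<Rightarrow> real"
  assumes P: "prob_space M" and i1: "integrable M T" and i2: "integrable M (\<lambda>\<omega>. T \<omega> ^ 2)"
    and e: "(\<integral>\<omega>. T \<omega> \<partial>M) = \<mu>" and mu: "\<mu> \<noteq> 0"
  shows "(\<integral>\<omega>. (T \<omega> / \<mu> - 1) ^ 2 \<partial>M) = (\<integral>\<omega>. T \<omega> ^ 2 \<partial>M) / \<mu>\<^sup>2 - 1"
proof -
  interpret prob_space M by fact
  have pw: "(T \<omega> / \<mu> - 1) ^ 2 = T \<omega> ^ 2 * (1 / \<mu>\<^sup>2) + (T \<omega> * (- 2 / \<mu>) + 1)" for \<omega>
    using mu by (simp add: power2_eq_square field_simps)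
  have "(\<integral>\<omega>. (T \<omega> / \<mu> - 1) ^ 2 \<partial>M) = (\<integral>\<omega>. T \<omega> ^ 2 * (1 / \<mu>\<^sup>2) + (T \<omega> * (- 2 / \<mu>) + 1) \<partial>M)"
    by (simp only: pw)
  also have "\<dots> = (\<integral>\<omega>. T \<omega> ^ 2 * (1 / \<mu>\<^sup>2) \<partial>M) + (\<integral>\<omega>. T \<omega> * (- 2 / \<mu>) + 1 \<partial>M)"
    using i1 i2 by (intro Bochner_Integration.integral_add) auto
  also have "(\<integral>\<omega>. T \<omega> * (- 2 / \<mu>) + 1 \<partial>M) = (\<integral>\<omega>. T \<omega> * (- 2 / \<mu>) \<partial>M) + (\<integral>\<omega>. 1 \<partial>M)"
    using i1 by (intro Bochner_Integration.integral_add) auto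
  finally show ?thesis using e mu by (simp add: prob_space field_simps power2_eq_square)
qed

theorem theorem1:
  fixes D :: "nat \<Rightarrow> real measure" and r :: "nat \<Rightarrow> nat \<Rightarrow> nat"
    and \<nu> \<delta> \<mu> :: "nat \<Rightarrow> real" and rlow rup :: "nat \<Rightarrow> nat"
  assumes prob: "\<And>n. n \<ge> 1 \<Longrightarrow> prob_space (D n)"
    and sets_D: "\<And>n. n \<ge> 1 \<Longrightarrow> sets (D n) = sets borel"
    and pos: "\<And>n. n \<ge> 1 \<Longrightarrow> (AE x in D n. x > 0)"
    and second: "\<And>n. n \<ge> 1 \<Longrightarrow> integrable (D n) (\<lambda>x. x ^ 2)"
    and \<nu>_def: "\<And>n. \<nu> n = (\<integral>x. x \<partial>D n)"
    and \<delta>_def: "\<And>n. \<delta> n = (\<integral>x. x ^ 2 \<partial>D n)"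
    and r_bounds: "\<And>n i. n \<ge> 1 \<Longrightarrow> i < n \<Longrightarrow> 1 \<le> r n i \<and> r n i \<le> n"
    and \<mu>_def: "\<And>n. \<mu> n = (\<Prod>i<n. real (r n i)) * (\<nu> n ^ n * fact n / real n ^ n)"
    and rlow_def: "\<And>n. rlow n = Min (r n ` {..<n})"
    and rup_def: "\<And>n. rup n = Max (r n ` {..<n})"
  shows "(\<forall>n\<ge>1. (\<integral>\<omega>. Tn n \<omega> \<partial>joint_space n (r n) (D n)) = \<mu> n)
    \<and> ((((\<lambda>n. sqrt (real n) * (\<delta> n / (\<nu> n ^ 2 * real (rlow n)))) \<longlonglongrightarrow> 0)
        \<and> ((\<lambda>n. real n * (\<delta> n / (\<nu> n ^ 2 * real (rlow n)) - 1 / real (rup n))) \<longlonglongrightarrow> 0))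
       \<longrightarrow> ((\<lambda>n. \<integral>\<omega>. (Tn n \<omega> / \<mu> n - 1) ^ 2 \<partial>joint_space n (r n) (D n)) \<longlonglongrightarrow> 0))"
proof -
  have intx: "integrable (D n) (\<lambda>x. x)" if n: "n \<ge> 1" for n
  proof -
    interpret prob_space "D n" using prob[OF n] .
    have "(\<lambda>x. x) \<in> borel_measurable (D n)" using sets_D[OF n] by (simp add: measurable_ident_sets)
    then show ?thesis by (rule square_integrable_imp_integrable[OF _ second[OF n]])
  qed
  have nupos: "\<nu> n > 0" if n: "n \<ge> 1" for n
  proof -
    interpret prob_space "D n" using prob[OF n] .
    have AE0: "AE x in D n. 0 \<le> x" using pos[OF n] by eventually_elim auto
    have ge: "\<nu> n \<ge> 0" unfolding \<nu>_def by (rule integral_nonneg_AE[OF AE0])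
    have "\<nu> n \<noteq> 0"
    proof
      assume "\<nu> n = 0"
      then have "AE x in D n. x = 0"
        using integral_nonneg_eq_0_iff_AE[OF intx[OF n] AE0] unfolding \<nu>_def by simp
      then have "AE x in D n. False" using pos[OF n] by eventually_elim auto
      then show False by simp
    qed
    then show ?thesis using ge by simp
  qed
  have dge: "\<delta> n \<ge> (\<nu> n)\<^sup>2" if n: "n \<ge> 1" for n
  proof -
    interpret prob_space "D n" using prob[OF n] .
    have "0 \<le> variance (\<lambda>x. x)" by (intro integral_nonneg_AE) auto
    also have "variance (\<lambda>x. x) = \<delta> n - (\<nu> n)\<^sup>2"
      unfolding \<nu>_def \<delta>_def by (rule variance_eq[OF intx[OF n]]) (use second[OF n] in simp)
    finally show ?thesis by simp
  qed
  have rprops: "rlow n \<le> r n i \<and> r n i \<le> rup n" if n: "n \<ge> 1" and i: "i < n" for n i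
    unfolding rlow_def rup_def using i by (auto intro!: Min_le Max_ge)
  have rl1: "rlow n \<ge> 1" if n: "n \<ge> 1" for n
  proof -
    have "rlow n \<in> r n ` {..<n}" unfolding rlow_def using n by (intro Min_in) (auto simp: lessThan_empty_iff)
    then show ?thesis using r_bounds[OF n] by auto
  qed
  have run: "rup n \<le> n" and ru1: "rup n \<ge> 1" if n: "n \<ge> 1" for n
  proof -
    have "rup n \<in> r n ` {..<n}" unfolding rup_def using n by (intro Max_in) (auto simp: lessThan_empty_iff)
    then show "rup n \<le> n" "rup n \<ge> 1" using r_bounds[OF n] by auto
  qed
  have mom1: "(\<integral>\<omega>. Tn n \<omega> \<partial>joint_space n (r n) (D n)) = \<mu> n" if n: "n \<ge> 1" for n
  proof -
    have "(\<integral>\<omega>. Tn n \<omega> \<partial>joint_space n (r n) (D n)) = fact n * (\<Prod>i<n. real (r n i) / real n) * (\<nu> n) ^ n"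
      unfolding \<nu>_def by (rule moments(2)[OF n prob[OF n] sets_D[OF n] second[OF n]]) (use r_bounds[OF n] in auto)
    also have "\<dots> = \<mu> n" unfolding \<mu>_def by (simp add: prod_dividef)
    finally show ?thesis .
  qed
  have mupos: "\<mu> n > 0" if n: "n \<ge> 1" for n
  proof -
    have "(\<Prod>i<n. real (r n i)) > 0" using r_bounds[OF n] by (intro prod_pos) fastforce
    then show ?thesis unfolding \<mu>_def using nupos[OF n] n by simp
  qed
  have V: "(\<integral>\<omega>. (Tn n \<omega> / \<mu> n - 1) ^ 2 \<partial>joint_space n (r n) (D n)) =
     (\<Sum>\<sigma>\<in>{\<sigma>. \<sigma> permutes {..<n}}. \<Sum>\<tau>\<in>{\<sigma>. \<sigma> permutes {..<n}}. \<Prod>i<n.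
         if \<sigma> i = \<tau> i then real (r n i) / real n * \<delta> n
         else real (r n i) * (real (r n i) - 1) / (real n * (real n - 1)) * (\<nu> n * \<nu> n))
      / (fact n * (\<Prod>i<n. real (r n i) / real n) * \<nu> n ^ n)\<^sup>2 - 1" if n: "n \<ge> 1" for n
  proof -
    have rb: "\<And>i. i < n \<Longrightarrow> 1 \<le> r n i \<and> r n i \<le> n" using r_bounds[OF n] by auto
    have PJ: "prob_space (joint_space n (r n) (D n))"
    proof -
      have "finite (row_sum_mats n (r n))" by (rule finite_rsm)
      moreover have "card (row_sum_mats n (r n)) \<noteq> 0" unfolding card_rsm using rb
        by (auto simp: prod_zero_iff) (meson not_le)
      ultimately have "row_sum_mats n (r n) \<noteq> {}" by auto
      then show ?thesis unfolding joint_space_def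
        by (intro prob_space_pair prob_space_PiM prob_space_measure_pmf) (use prob[OF n] in auto)
    qed
    have mu_eq: "\<mu> n = fact n * (\<Prod>i<n. real (r n i) / real n) * \<nu> n ^ n"
      unfolding \<mu>_def by (simp add: prod_dividef)
    have mune: "\<mu> n \<noteq> 0" using mupos[OF n] by simp
    have s1: "(\<integral>\<omega>. (Tn n \<omega> / \<mu> n - 1) ^ 2 \<partial>joint_space n (r n) (D n)) =
        (\<integral>\<omega>. Tn n \<omega> ^ 2 \<partial>joint_space n (r n) (D n)) / (\<mu> n)\<^sup>2 - 1"
      by (rule sq_dev[OF PJ moments(1,3)[OF n prob[OF n] sets_D[OF n] second[OF n] rb] mom1[OF n] mune])
    have s2: "(\<integral>\<omega>. Tn n \<omega> ^ 2 \<partial>joint_space n (r n) (D n)) =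
      (\<Sum>\<sigma>\<in>{\<sigma>. \<sigma> permutes {..<n}}. \<Sum>\<tau>\<in>{\<sigma>. \<sigma> permutes {..<n}}. \<Prod>i<n.
         if \<sigma> i = \<tau> i then real (r n i) / real n * \<delta> n
         else real (r n i) * (real (r n i) - 1) / (real n * (real n - 1)) * (\<nu> n * \<nu> n))"
      unfolding \<nu>_def \<delta>_def by (rule moments(4)[OF n prob[OF n] sets_D[OF n] second[OF n] rb])
    show ?thesis unfolding s1 s2 by (simp only: mu_eq)
  qed
  show ?thesis
  proof (intro conjI allI impI)
    fix n :: nat assume "n \<ge> 1" then show "(\<integral>\<omega>. Tn n \<omega> \<partial>joint_space n (r n) (D n)) = \<mu> n" by (rule mom1)
  next
    define x where "x n = 1 / real (rup n)" for n
    define y where "y n = \<delta> n / (\<nu> n ^ 2 * real (rlow n))" for n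
    assume H: "((\<lambda>n. sqrt (real n) * (\<delta> n / (\<nu> n ^ 2 * real (rlow n)))) \<longlonglongrightarrow> 0)
        \<and> ((\<lambda>n. real n * (\<delta> n / (\<nu> n ^ 2 * real (rlow n)) - 1 / real (rup n))) \<longlonglongrightarrow> 0)"
    then have h1: "(\<lambda>n. sqrt (real n) * y n) \<longlonglongrightarrow> 0" and h2: "(\<lambda>n. real n * (y n - x n)) \<longlonglongrightarrow> 0"
      unfolding x_def y_def by auto
    have xy: "0 < x n \<and> x n \<le> y n" if n: "n \<ge> 1" for n
    proof -
      have "\<delta> n / (\<nu> n)\<^sup>2 \<ge> 1" using dge[OF n] nupos[OF n] by simp
      then have "y n \<ge> 1 / real (rlow n)" unfolding y_def using rl1[OF n]
        by (simp add: divide_right_mono flip: divide_divide_eq_left)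
      moreover have "1 / real (rlow n) \<ge> 1 / real (rup n)"
        using rl1[OF n] rprops[OF n, of 0] n by (intro divide_left_mono) auto
      ultimately show ?thesis unfolding x_def using ru1[OF n] by auto
    qed
    have ysq: "y n \<le> sqrt (real n) * y n" if n: "n \<ge> 1" for n
    proof -
      have "y n \<ge> 0" using xy[OF n] by linarith
      moreover have "sqrt (real n) \<ge> 1" using n by simp
      ultimately show ?thesis using mult_right_mono[of 1 "sqrt (real n)" "y n"] by simp
    qed
    have ev1: "eventually (\<lambda>n. n \<ge> (1::nat)) sequentially" by (rule eventually_ge_at_top)
    have x0: "x \<longlonglongrightarrow> 0"
    proof (rule tendsto_sandwich[OF _ _ tendsto_const h1])
      show "\<forall>\<^sub>F n in sequentially. 0 \<le> x n" using ev1 by eventually_elim (use xy in force)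
      show "\<forall>\<^sub>F n in sequentially. x n \<le> sqrt (real n) * y n" using ev1
        by eventually_elim (meson xy ysq order_trans)
    qed
    define E where "E n = real n * (y n - x n) + 1 / (real n - 1) + real n * (y n)\<^sup>2 / (1 - x n)" for n
    have E0: "E \<longlonglongrightarrow> 0"
    proof -
      have a: "(\<lambda>n. 1 / (real n - 1)) \<longlonglongrightarrow> 0" by real_asymp
      have b: "(\<lambda>n. (sqrt (real n) * y n) ^ 2 / (1 - x n)) \<longlonglongrightarrow> 0 ^ 2 / (1 - 0)"
        by (intro tendsto_intros h1 x0) auto
      have c: "(\<lambda>n. real n * (y n)\<^sup>2 / (1 - x n)) \<longlonglongrightarrow> 0"
      proof -
        have eq: "(\<lambda>n. (sqrt (real n) * y n) ^ 2 / (1 - x n)) = (\<lambda>n. real n * (y n)\<^sup>2 / (1 - x n))"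
          by (rule ext) (simp only: power_mult_distrib real_sqrt_pow2[OF of_nat_0_le_iff])
        show ?thesis using b unfolding eq by simp
      qed
      have "(\<lambda>n. real n * (y n - x n) + 1 / (real n - 1) + real n * (y n)\<^sup>2 / (1 - x n)) \<longlonglongrightarrow> 0 + 0 + 0"
        by (intro tendsto_add h2 a c)
      then show ?thesis unfolding E_def by simp
    qed
    have eE: "(\<lambda>n. exp (E n) - 1) \<longlonglongrightarrow> exp 0 - 1"
      by (intro tendsto_intros E0)
    have evx: "eventually (\<lambda>n. x n < 1 / 2) sequentially"
      using x0 by (rule order_tendstoD) simp
    have ev2: "eventually (\<lambda>n. n \<ge> (2::nat)) sequentially" by (rule eventually_ge_at_top)
    show "(\<lambda>n. \<integral>\<omega>. (Tn n \<omega> / \<mu> n - 1) ^ 2 \<partial>joint_space n (r n) (D n)) \<longlonglongrightarrow> 0"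
    proof (rule tendsto_sandwich[OF _ _ tendsto_const])
      show "\<forall>\<^sub>F n in sequentially. 0 \<le> (\<integral>\<omega>. (Tn n \<omega> / \<mu> n - 1) ^ 2 \<partial>joint_space n (r n) (D n))"
        by (intro always_eventually allI integral_nonneg_AE AE_I2) simp
      show "(\<lambda>n. exp (E n) - 1) \<longlonglongrightarrow> 0" using eE by simp
      show "\<forall>\<^sub>F n in sequentially. (\<integral>\<omega>. (Tn n \<omega> / \<mu> n - 1) ^ 2 \<partial>joint_space n (r n) (D n)) \<le> exp (E n) - 1"
        using ev2 evx
      proof eventually_elim
        case (elim n)
        then have n: "n \<ge> 1" "n \<ge> 2" and xl: "x n < 1 / 2" by auto
        have ru2: "rup n \<ge> 2"
        proof (rule ccontr)
          assume "\<not> rup n \<ge> 2"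
          then have "rup n = 1" using ru1[OF n(1)] by simp
          then show False using xl unfolding x_def by simp
        qed
        have "(\<integral>\<omega>. (Tn n \<omega> / \<mu> n - 1) ^ 2 \<partial>joint_space n (r n) (D n)) \<le>
           ((1 - 1 / real (rup n)) * real n / (real n - 1)) ^ n *
           exp ((real n * \<delta> n / ((\<nu> n)\<^sup>2 * real (rlow n)) - (1 - 1 / real (rup n)) * real n / (real n - 1))
            / ((1 - 1 / real (rup n)) * real n / (real n - 1))) - 1"
          unfolding V[OF n(1)]
          using ratio_bound[OF n(2) nupos[OF n(1)] dge[OF n(1)] rprops[OF n(1)] rl1[OF n(1)] ru2 run[OF n(1)]]
          by simp
        also have "\<dots> = ((1 - x n) * real n / (real n - 1)) ^ n *
           exp ((real n * y n - (1 - x n) * real n / (real n - 1)) / ((1 - x n) * real n / (real n - 1))) - 1"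
          unfolding x_def y_def by simp
        also have "\<dots> \<le> exp (E n) - 1"
          unfolding E_def using final_bound[OF n(2), of "x n" "y n"] xy[OF n(1)] xl by simp
        finally show ?case .
      qed
    qed
  qed
qed

end
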